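(* Let $\Sigma=\{a,b\}$ and let $A,B,C$ be positive integers. For $w\in\mathbb{P}^\Sigma$ and $M\in[0..B]^\Sigma_\Sigma$ let $\mathrm{angle}(w,M)=w+M\mathbb{P}^\Sigma$. For $v\in\mathbb{P}^\Sigma$ let $$\mathrm{reg}(v)=\{u\in\mathbb{P}^\Sigma:\ \forall w\in[0;A]^\Sigma\ \forall M\in[0..B]^\Sigma_\Sigma\ \ (v\in\mathrm{angle}(w,M)\iff u\in\mathrm{angle}(w,M))\}.$$ Then for each $v\in\mathbb{N}^\Sigma$ there exists $v'\in\mathbb{N}^\Sigma$ such that $\|v'\|=O(AB^2+BC)$, $v'\in\mathrm{reg}(v)$, and $v-v'\in C\mathbb{Z}^\Sigma$; the implicit constant is absolute (independent of $A,B,C,v$).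
   Context: $\mathbb{P}$ denotes the set of non-negative rationals, $[0..B]=\{0,1,\ldots,B\}$, $[0;A]$ the set of rationals in the interval from $0$ to $A$. $[0..B]^\Sigma_\Sigma$ is the set of $\Sigma\times\Sigma$ matrices with entries in $[0..B]$; for a matrix $M$ with columns $M^x$ and $\lambda\in\mathbb{P}^\Sigma$, $M\lambda=\sum_x\lambda_xM^x$, and $M\mathbb{P}^\Sigma=\{M\lambda:\lambda\in\mathbb{P}^\Sigma\}$; $w+X=\{w+x:x\in X\}$. For $v\in\mathbb{Q}^\Sigma$, $\|v\|=\max_x|v(x)|$; $C\mathbb{Z}^\Sigma=\{Cz:z\in\mathbb{Z}^\Sigma\}$. *)

theory Defs
  imports Main "HOL.Rat"
begin

datatype sig = a | b

definition vnorm :: "(sig \<Rightarrow> rat) \<Rightarrow> rat" where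
  "vnorm v = max \<bar>v a\<bar> \<bar>v b\<bar>"

text \<open>M lambda = sum_x lambda_x M^x, where M^x is the column x, i.e. (M lambda)(y) = sum_x lambda_x M y x.\<close>
definition matvec :: "(sig \<Rightarrow> sig \<Rightarrow> nat) \<Rightarrow> (sig \<Rightarrow> rat) \<Rightarrow> (sig \<Rightarrow> rat)" where
  "matvec M l = (\<lambda>y. l a * of_nat (M y a) + l b * of_nat (M y b))"

definition angle :: "(sig \<Rightarrow> rat) \<Rightarrow> (sig \<Rightarrow> sig \<Rightarrow> nat) \<Rightarrow> (sig \<Rightarrow> rat) set" where
  "angle w M = {u. \<exists>l. (\<forall>x. 0 \<le> l x) \<and> u = (\<lambda>y. w y + matvec M l y)}"

definition reg :: "nat \<Rightarrow> nat \<Rightarrow> (sig \<Rightarrow> rat) \<Rightarrow> (sig \<Rightarrow> rat) set" where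
  "reg A B v = {u. (\<forall>x. 0 \<le> u x) \<and>
     (\<forall>w M. (\<forall>x. 0 \<le> w x \<and> w x \<le> of_nat A) \<longrightarrow> (\<forall>x y. M x y \<le> B) \<longrightarrow>
        (v \<in> angle w M \<longleftrightarrow> u \<in> angle w M))}"

end

theory Submission
  imports Defs
begin

definition good :: "int \<Rightarrow> int \<Rightarrow> int \<Rightarrow> int \<Rightarrow> int \<Rightarrow> bool" where
  "good A c1 c2 F G \<longleftrightarrow> F = G \<or> (c1*A < F \<and> c1*A < G) \<or> (F < -(c2*A) \<and> G < -(c2*A))"

definition eqv :: "int \<Rightarrow> int \<Rightarrow> int \<Rightarrow> int \<Rightarrow> int \<Rightarrow> int \<Rightarrow> bool" where
  "eqv A B p q p' q' \<longleftrightarrow> (\<forall>c1 c2. 0 \<le> c1 \<and> c1 \<le> B \<and> 0 \<le> c2 \<and> c2 \<le> B \<longrightarrow>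
      good A c1 c2 (c1*q - c2*p) (c1*q' - c2*p'))"

lemma eqv_refl: "eqv A B p q p q" by (simp add: eqv_def good_def)

lemma eqv_trans: assumes "0 \<le> A" "eqv A B p q p' q'" "eqv A B p' q' p'' q''"
  shows "eqv A B p q p'' q''"
  unfolding eqv_def
proof (intro allI impI)
  fix c1 c2 :: int assume h: "0 \<le> c1 \<and> c1 \<le> B \<and> 0 \<le> c2 \<and> c2 \<le> B"
  have g1: "good A c1 c2 (c1*q - c2*p) (c1*q' - c2*p')" using assms(2) h unfolding eqv_def by blast
  have g2: "good A c1 c2 (c1*q' - c2*p') (c1*q'' - c2*p'')" using assms(3) h unfolding eqv_def by blast
  have "0 \<le> c1*A" "0 \<le> c2*A" using h assms(1) by auto
  then show "good A c1 c2 (c1*q - c2*p) (c1*q'' - c2*p'')" using g1 g2 unfolding good_def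
    by (smt (verit))
qed

lemma fin_aux:
  fixes dd x X Y :: int
  assumes "0 < dd" "dd * x \<le> X + Y*dd" "0 \<le> X"
  shows "x \<le> X + Y"
proof (rule ccontr)
  assume "\<not> x \<le> X + Y"
  hence "X + Y + 1 \<le> x" by simp
  hence "dd*(X+Y+1) \<le> dd*x" using assms(1) by (intro mult_left_mono) auto
  moreover have "X \<le> dd*X" using assms(1,3) by (simp add: mult_le_cancel_right1)
  ultimately show False using assms(1,2) by (simp add: algebra_simps)
qed

lemma key:
  fixes A B C p q c1 c2 u1 u2 :: int
  assumes pos: "0 < A" "0 < B" "0 < C"
    and c: "0 \<le> c1" "c1 \<le> B" "0 \<le> c2" "c2 \<le> B"
    and u: "0 \<le> u1" "u1 \<le> B" "0 \<le> u2" "u2 \<le> B"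
    and mn: "\<bar>u1*q - u2*p\<bar> \<le> \<bar>c1*q - c2*p\<bar>"
    and ng: "\<not> good A c1 c2 (c1*q - c2*p) (c1*(q - C*u2) - c2*(p - C*u1))"
  shows "\<bar>p\<bar> \<le> 2*A*B*B + 2*B*C \<and> \<bar>q\<bar> \<le> 2*A*B*B + 2*B*C"
proof -
  define F where "F = c1*q - c2*p"
  define al where "al = u1*q - u2*p"
  define dd where "dd = c1*u2 - c2*u1"
  have hG: "c1*(q - C*u2) - c2*(p - C*u1) = F - C*dd" unfolding F_def dd_def by (simp add: algebra_simps)
  have ng': "\<not> good A c1 c2 F (F - C*dd)" using ng hG F_def by simp
  have dd0: "dd \<noteq> 0" using ng' unfolding good_def by auto
  have "c1*A \<le> B*A" using c pos by (intro mult_right_mono) auto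
  moreover have "c2*A \<le> B*A" using c pos by (intro mult_right_mono) auto
  moreover have "0 \<le> c1*A" "0 \<le> c2*A" using c pos by auto
  moreover have "C*dd \<le> C*\<bar>dd\<bar>" using pos by (intro mult_left_mono) auto
  moreover have "C*(-dd) \<le> C*\<bar>dd\<bar>" using pos by (intro mult_left_mono) auto
  ultimately have hF: "\<bar>F\<bar> \<le> A*B + C*\<bar>dd\<bar>" using ng' unfolding good_def
    by (smt (verit) mult.commute mult_minus_right)
  have hp: "dd*p = F*u1 - al*c1" unfolding dd_def F_def al_def by (simp add: algebra_simps)
  have hq: "dd*q = F*u2 - al*c2" unfolding dd_def F_def al_def by (simp add: algebra_simps)
  have mn': "\<bar>al\<bar> \<le> \<bar>F\<bar>" using mn unfolding al_def F_def .
  have b1: "\<bar>F*u1 - al*c1\<bar> \<le> 2*B*\<bar>F\<bar>"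
  proof -
    have t: "\<bar>F*u1 - al*c1\<bar> \<le> \<bar>F*u1\<bar> + \<bar>al*c1\<bar>" by (rule abs_triangle_ineq4)
    have t1: "\<bar>F*u1\<bar> = \<bar>F\<bar>*u1" using u by (simp add: abs_mult)
    have t2: "\<bar>al*c1\<bar> = \<bar>al\<bar>*c1" using c by (simp add: abs_mult)
    have "\<bar>F\<bar>*u1 \<le> \<bar>F\<bar>*B" using u by (intro mult_left_mono) auto
    moreover have "\<bar>al\<bar>*c1 \<le> \<bar>F\<bar>*c1" using c mn' by (intro mult_right_mono) auto
    moreover have "\<bar>F\<bar>*c1 \<le> \<bar>F\<bar>*B" using c by (intro mult_left_mono) auto
    moreover have "2*B*\<bar>F\<bar> = \<bar>F\<bar>*B + \<bar>F\<bar>*B" by (simp add: algebra_simps)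
    ultimately show ?thesis using t t1 t2 by linarith
  qed
  have b2: "\<bar>F*u2 - al*c2\<bar> \<le> 2*B*\<bar>F\<bar>"
  proof -
    have t: "\<bar>F*u2 - al*c2\<bar> \<le> \<bar>F*u2\<bar> + \<bar>al*c2\<bar>" by (rule abs_triangle_ineq4)
    have t1: "\<bar>F*u2\<bar> = \<bar>F\<bar>*u2" using u by (simp add: abs_mult)
    have t2: "\<bar>al*c2\<bar> = \<bar>al\<bar>*c2" using c by (simp add: abs_mult)
    have "\<bar>F\<bar>*u2 \<le> \<bar>F\<bar>*B" using u by (intro mult_left_mono) auto
    moreover have "\<bar>al\<bar>*c2 \<le> \<bar>F\<bar>*c2" using c mn' by (intro mult_right_mono) auto
    moreover have "\<bar>F\<bar>*c2 \<le> \<bar>F\<bar>*B" using c by (intro mult_left_mono) auto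
    moreover have "2*B*\<bar>F\<bar> = \<bar>F\<bar>*B + \<bar>F\<bar>*B" by (simp add: algebra_simps)
    ultimately show ?thesis using t t1 t2 by linarith
  qed
  have b3: "2*B*\<bar>F\<bar> \<le> 2*B*(A*B + C*\<bar>dd\<bar>)" using hF pos by (intro mult_left_mono) auto
  have e: "2*B*(A*B + C*\<bar>dd\<bar>) = 2*A*B*B + (2*B*C)*\<bar>dd\<bar>" by (simp add: algebra_simps)
  have ep: "\<bar>dd\<bar>*\<bar>p\<bar> = \<bar>F*u1 - al*c1\<bar>" using hp by (simp add: abs_mult[symmetric])
  have eq: "\<bar>dd\<bar>*\<bar>q\<bar> = \<bar>F*u2 - al*c2\<bar>" using hq by (simp add: abs_mult[symmetric])
  have "\<bar>dd\<bar>*\<bar>p\<bar> \<le> 2*A*B*B + (2*B*C)*\<bar>dd\<bar>" using ep b1 b3 e by linarith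
  moreover have "\<bar>dd\<bar>*\<bar>q\<bar> \<le> 2*A*B*B + (2*B*C)*\<bar>dd\<bar>" using eq b2 b3 e by linarith
  moreover have "0 \<le> 2*A*B*B" using pos by simp
  moreover have "0 < \<bar>dd\<bar>" using dd0 by simp
  ultimately show ?thesis using fin_aux by blast
qed


lemma step:
  fixes A B C p q :: int
  assumes pos: "0 < A" "0 < B" "0 < C" and nn: "0 \<le> p" "0 \<le> q"
    and big: "2*A*B*B + 2*B*C < p \<or> 2*A*B*B + 2*B*C < q"
  shows "\<exists>u1 u2. 0 \<le> u1 \<and> u1 \<le> B \<and> 0 \<le> u2 \<and> u2 \<le> B \<and> (u1 \<noteq> 0 \<or> u2 \<noteq> 0) \<and>
     0 \<le> p - C*u1 \<and> 0 \<le> q - C*u2 \<and> eqv A B p q (p - C*u1) (q - C*u2)"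
proof -
  define S where "S = {(u1::int,u2::int). 0 \<le> u1 \<and> u1 \<le> B \<and> 0 \<le> u2 \<and> u2 \<le> B \<and> (u1 \<noteq> 0 \<or> u2 \<noteq> 0)}"
  have fS: "finite S"
    by (rule finite_subset[of _ "{0..B} \<times> {0..B}"]) (auto simp: S_def)
  have neS: "(1,0) \<in> S" using pos by (simp add: S_def)
  hence neS': "S \<noteq> {}" by auto
  define f where "f = (\<lambda>(u1,u2). \<bar>u1*q - u2*p\<bar>)"
  define u where "u = arg_min_on f S"
  have uS: "u \<in> S" using arg_min_if_finite(1)[OF fS neS', of f] by (simp add: u_def)
  have umin: "\<And>c. c \<in> S \<Longrightarrow> f u \<le> f c"
    using arg_min_if_finite(2)[OF fS neS', of f] by (auto simp: u_def not_less)
  obtain u1 u2 where uu: "u = (u1,u2)" by (cases u)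
  have ub: "0 \<le> u1" "u1 \<le> B" "0 \<le> u2" "u2 \<le> B" "u1 \<noteq> 0 \<or> u2 \<noteq> 0" using uS uu by (auto simp: S_def)
  have eq: "eqv A B p q (p - C*u1) (q - C*u2)"
    unfolding eqv_def
  proof (intro allI impI)
    fix c1 c2 :: int assume h: "0 \<le> c1 \<and> c1 \<le> B \<and> 0 \<le> c2 \<and> c2 \<le> B"
    show "good A c1 c2 (c1*q - c2*p) (c1*(q - C*u2) - c2*(p - C*u1))"
    proof (cases "c1 = 0 \<and> c2 = 0")
      case True then show ?thesis by (simp add: good_def)
    next
      case False
      then have "(c1,c2) \<in> S" using h by (auto simp: S_def)
      then have mn: "\<bar>u1*q - u2*p\<bar> \<le> \<bar>c1*q - c2*p\<bar>" using umin[of "(c1,c2)"] uu by (simp add: f_def)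
      show ?thesis
      proof (rule ccontr)
        assume ng: "\<not> ?thesis"
        have "\<bar>p\<bar> \<le> 2*A*B*B + 2*B*C \<and> \<bar>q\<bar> \<le> 2*A*B*B + 2*B*C"
          using key[OF pos, of c1 c2 u1 u2 q p] h ub mn ng by blast
        with big nn show False by auto
      qed
    qed
  qed
  have r01: "0 \<le> (0::int) \<and> 0 \<le> B \<and> 0 \<le> (1::int) \<and> 1 \<le> B" using pos by auto
  have g01: "good A 0 1 (0*q - 1*p) (0*(q - C*u2) - 1*(p - C*u1))"
    using eq[unfolded eqv_def, rule_format, OF r01] .
  hence "0 \<le> p - C*u1" using nn pos unfolding good_def by auto
  moreover have r10: "0 \<le> (1::int) \<and> 1 \<le> B \<and> 0 \<le> (0::int) \<and> 0 \<le> B" using pos by auto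
  have g10: "good A 1 0 (1*q - 0*p) (1*(q - C*u2) - 0*(p - C*u1))"
    using eq[unfolded eqv_def, rule_format, OF r10] .
  hence "0 \<le> q - C*u2" using nn pos unfolding good_def by auto
  ultimately show ?thesis using ub eq by blast
qed

definition chr2' :: "rat \<Rightarrow> rat \<Rightarrow> rat \<Rightarrow> rat \<Rightarrow> rat \<Rightarrow> bool \<Rightarrow> bool" where
  "chr2' d s1 s2 xa xb nz \<longleftrightarrow>
    (if d \<noteq> 0 then (0 < d \<and> \<not> s1 < 0 \<and> \<not> 0 < s2) \<or> (d < 0 \<and> \<not> 0 < s1 \<and> \<not> s2 < 0)
     else \<not> xa < 0 \<and> \<not> xb < 0 \<and> s1 = 0 \<and> s2 = 0 \<and> ((xa = 0 \<and> xb = 0) \<or> nz))"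

definition chr2 :: "rat \<Rightarrow> rat \<Rightarrow> rat \<Rightarrow> rat \<Rightarrow> rat \<Rightarrow> rat \<Rightarrow> bool" where
  "chr2 m11 m12 n1 n2 xa xb = chr2' (m11*n2 - n1*m12) (m11*xb - m12*xa) (n1*xb - n2*xa) xa xb
     (m11 \<noteq> 0 \<or> m12 \<noteq> 0 \<or> n1 \<noteq> 0 \<or> n2 \<noteq> 0)"

definition sim :: "rat \<Rightarrow> rat \<Rightarrow> bool" where
  "sim s t \<longleftrightarrow> (0 < s \<longleftrightarrow> 0 < t) \<and> (s = 0 \<longleftrightarrow> t = 0) \<and> (s < 0 \<longleftrightarrow> t < 0)"

lemma chr2'_inv: "sim s1 t1 \<Longrightarrow> sim s2 t2 \<Longrightarrow> sim xa ya \<Longrightarrow> sim xb yb \<Longrightarrow>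
   chr2' d s1 s2 xa xb nz \<longleftrightarrow> chr2' d t1 t2 ya yb nz"
  unfolding chr2'_def sim_def by auto

lemma cone2:
  fixes m11 m12 n1 n2 xa xb :: rat
  assumes nn: "0 \<le> m11" "0 \<le> m12" "0 \<le> n1" "0 \<le> n2"
  shows "(\<exists>la lb. 0 \<le> la \<and> 0 \<le> lb \<and> xa = la*m11 + lb*n1 \<and> xb = la*m12 + lb*n2)
     \<longleftrightarrow> chr2 m11 m12 n1 n2 xa xb"
proof
  assume "\<exists>la lb. 0 \<le> la \<and> 0 \<le> lb \<and> xa = la*m11 + lb*n1 \<and> xb = la*m12 + lb*n2"
  then obtain la lb where l: "0 \<le> la" "0 \<le> lb" "xa = la*m11 + lb*n1" "xb = la*m12 + lb*n2" by blast
  define d where "d = m11*n2 - n1*m12"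
  have s1: "m11*xb - m12*xa = lb*d" unfolding d_def l by (simp add: algebra_simps)
  have s2: "n1*xb - n2*xa = -(la*d)" unfolding d_def l by (simp add: algebra_simps)
  have xa0: "0 \<le> xa" "0 \<le> xb" unfolding l using l nn by auto
  show "chr2 m11 m12 n1 n2 xa xb"
    unfolding chr2_def chr2'_def d_def[symmetric] s1 s2
  proof (cases "d = 0")
    case True
    have "(xa = 0 \<and> xb = 0) \<or> (m11 \<noteq> 0 \<or> m12 \<noteq> 0 \<or> n1 \<noteq> 0 \<or> n2 \<noteq> 0)" using l by auto
    then show "if d \<noteq> 0 then (0 < d \<and> \<not> lb*d < 0 \<and> \<not> 0 < -(la*d)) \<or> (d < 0 \<and> \<not> 0 < lb*d \<and> \<not> -(la*d) < 0)
     else \<not> xa < 0 \<and> \<not> xb < 0 \<and> lb*d = 0 \<and> -(la*d) = 0 \<and> ((xa = 0 \<and> xb = 0) \<or> (m11 \<noteq> 0 \<or> m12 \<noteq> 0 \<or> n1 \<noteq> 0 \<or> n2 \<noteq> 0))"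
      using True xa0 by simp
  next
    case False
    have "0 < d \<or> d < 0" using False by auto
    then show "if d \<noteq> 0 then (0 < d \<and> \<not> lb*d < 0 \<and> \<not> 0 < -(la*d)) \<or> (d < 0 \<and> \<not> 0 < lb*d \<and> \<not> -(la*d) < 0)
     else \<not> xa < 0 \<and> \<not> xb < 0 \<and> lb*d = 0 \<and> -(la*d) = 0 \<and> ((xa = 0 \<and> xb = 0) \<or> (m11 \<noteq> 0 \<or> m12 \<noteq> 0 \<or> n1 \<noteq> 0 \<or> n2 \<noteq> 0))"
      using False l(1,2) by (auto simp: mult_less_0_iff zero_less_mult_iff)
  qed
next
  assume c: "chr2 m11 m12 n1 n2 xa xb"
  define d where "d = m11*n2 - n1*m12"
  define s1 where "s1 = m11*xb - m12*xa"
  define s2 where "s2 = n1*xb - n2*xa"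
  have c': "chr2' d s1 s2 xa xb (m11 \<noteq> 0 \<or> m12 \<noteq> 0 \<or> n1 \<noteq> 0 \<or> n2 \<noteq> 0)"
    using c unfolding chr2_def d_def s1_def s2_def .
  show "\<exists>la lb. 0 \<le> la \<and> 0 \<le> lb \<and> xa = la*m11 + lb*n1 \<and> xb = la*m12 + lb*n2"
  proof (cases "d = 0")
    case False
    have sg: "(0 < d \<and> 0 \<le> s1 \<and> s2 \<le> 0) \<or> (d < 0 \<and> s1 \<le> 0 \<and> 0 \<le> s2)"
      using c' False unfolding chr2'_def by auto
    have la: "0 \<le> -s2/d" using sg by (auto simp: divide_nonpos_pos divide_nonneg_neg)
    have lb: "0 \<le> s1/d" using sg by (auto simp: divide_nonneg_pos divide_nonpos_neg)
    have i1: "(-s2)*m11 + s1*n1 = xa*d" unfolding s1_def s2_def d_def by (simp add: algebra_simps)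
    have i2: "(-s2)*m12 + s1*n2 = xb*d" unfolding s1_def s2_def d_def by (simp add: algebra_simps)
    have e1': "xa = ((-s2)*m11 + s1*n1)/d" using i1 False by (simp add: eq_divide_eq)
    have e2': "xb = ((-s2)*m12 + s1*n2)/d" using i2 False by (simp add: eq_divide_eq)
    have e1: "xa = (-s2/d)*m11 + (s1/d)*n1" using e1' by (simp add: add_divide_distrib diff_divide_distrib)
    have e2: "xb = (-s2/d)*m12 + (s1/d)*n2" using e2' by (simp add: add_divide_distrib diff_divide_distrib)
    show ?thesis using la lb e1 e2 by blast
  next
    case True
    have h: "0 \<le> xa" "0 \<le> xb" "s1 = 0" "s2 = 0" "(xa = 0 \<and> xb = 0) \<or> (m11 \<noteq> 0 \<or> m12 \<noteq> 0 \<or> n1 \<noteq> 0 \<or> n2 \<noteq> 0)"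
      using c' True unfolding chr2'_def by auto
    consider "xa = 0 \<and> xb = 0" | "m11 \<noteq> 0" | "m11 = 0" "m12 \<noteq> 0" | "n1 \<noteq> 0" | "n1 = 0" "n2 \<noteq> 0"
      using h(5) by blast
    then show ?thesis
    proof cases
      case 1 then show ?thesis by (rule_tac x=0 in exI, rule_tac x=0 in exI) simp
    next
      case 2
      have "m11*xb = m12*xa" using h(3) unfolding s1_def by simp
      hence "xb = (xa/m11)*m12" using 2 by (simp add: field_simps)
      moreover have "xa = (xa/m11)*m11" using 2 by simp
      moreover have "0 \<le> xa/m11" using h(1) nn by simp
      ultimately show ?thesis by (rule_tac x="xa/m11" in exI, rule_tac x=0 in exI) simp
    next
      case 3
      have "xa = 0" using h(3) 3 unfolding s1_def by simp
      moreover have "xb = (xb/m12)*m12" using 3 by simp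
      moreover have "0 \<le> xb/m12" using h(2) nn by simp
      ultimately show ?thesis using 3 by (rule_tac x="xb/m12" in exI, rule_tac x=0 in exI) simp
    next
      case 4
      have "n1*xb = n2*xa" using h(4) unfolding s2_def by simp
      hence "xb = (xa/n1)*n2" using 4 by (simp add: field_simps)
      moreover have "xa = (xa/n1)*n1" using 4 by simp
      moreover have "0 \<le> xa/n1" using h(1) nn by simp
      ultimately show ?thesis by (rule_tac x=0 in exI, rule_tac x="xa/n1" in exI) simp
    next
      case 5
      have "xa = 0" using h(4) 5 unfolding s2_def by simp
      moreover have "xb = (xb/n2)*n2" using 5 by simp
      moreover have "0 \<le> xb/n2" using h(2) nn by simp
      ultimately show ?thesis using 5 by (rule_tac x=0 in exI, rule_tac x="xb/n2" in exI) simp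
    qed
  qed
qed


lemma angle_iff:
  "u \<in> angle w M \<longleftrightarrow> (\<exists>la lb. 0 \<le> la \<and> 0 \<le> lb \<and>
     u a - w a = la*of_nat (M a a) + lb*of_nat (M a b) \<and> u b - w b = la*of_nat (M b a) + lb*of_nat (M b b))"
proof
  assume "u \<in> angle w M"
  then obtain l where l: "\<forall>x. 0 \<le> l x" "u = (\<lambda>y. w y + matvec M l y)" unfolding angle_def by blast
  show "\<exists>la lb. 0 \<le> la \<and> 0 \<le> lb \<and>
     u a - w a = la*of_nat (M a a) + lb*of_nat (M a b) \<and> u b - w b = la*of_nat (M b a) + lb*of_nat (M b b)"
    apply (rule exI[of _ "l a"], rule exI[of _ "l b"]) using l by (simp add: matvec_def)
next
  assume "\<exists>la lb. 0 \<le> la \<and> 0 \<le> lb \<and>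
     u a - w a = la*of_nat (M a a) + lb*of_nat (M a b) \<and> u b - w b = la*of_nat (M b a) + lb*of_nat (M b b)"
  then obtain la lb where h: "0 \<le> la" "0 \<le> lb"
     "u a - w a = la*of_nat (M a a) + lb*of_nat (M a b)" "u b - w b = la*of_nat (M b a) + lb*of_nat (M b b)"
    by blast
  define l where "l = (\<lambda>y::sig. case y of a \<Rightarrow> la | b \<Rightarrow> lb)"
  have "\<forall>x. 0 \<le> l x" using h by (simp add: l_def split: sig.split)
  moreover have "u = (\<lambda>y. w y + matvec M l y)"
  proof
    fix y show "u y = w y + matvec M l y"
      using h by (cases y) (simp_all add: matvec_def l_def algebra_simps)
  qed
  ultimately show "u \<in> angle w M" unfolding angle_def by blast
qed

lemma gsa: "sim (of_nat 0 * X - of_nat 1 * Y) (of_nat 0 * X' - of_nat 1 * Y') \<Longrightarrow> sim Y Y'"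
  by (auto simp: sim_def)
lemma gsb: "sim (of_nat 1 * X - of_nat 0 * Y) (of_nat 1 * X' - of_nat 0 * Y') \<Longrightarrow> sim X X'"
  by (auto simp: sim_def)
lemma sim_neg: "sim (-s) (-t) \<Longrightarrow> sim s t" by (auto simp: sim_def)

lemma gsim:
  fixes A B :: nat and v v' :: "sig \<Rightarrow> nat" and w :: "sig \<Rightarrow> rat" and c1 c2 :: nat
  assumes e: "eqv (int A) (int B) (int (v a)) (int (v b)) (int (v' a)) (int (v' b))"
    and c: "c1 \<le> B" "c2 \<le> B"
    and w: "\<forall>x. 0 \<le> w x \<and> w x \<le> of_nat A"
  shows "sim (of_nat c1 * (of_nat (v b) - w b) - of_nat c2 * (of_nat (v a) - w a))
             (of_nat c1 * (of_nat (v' b) - w b) - of_nat c2 * (of_nat (v' a) - w a))"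
proof -
  define F where "F = int c1 * int (v b) - int c2 * int (v a)"
  define G where "G = int c1 * int (v' b) - int c2 * int (v' a)"
  have g: "good (int A) (int c1) (int c2) F G"
    using e c unfolding eqv_def F_def G_def by auto
  define t where "t = (of_nat c1 * w b - of_nat c2 * w a :: rat)"
  have "of_nat c1 * w b \<le> of_nat c1 * (of_nat A::rat)" using w by (intro mult_left_mono) auto
  moreover have "0 \<le> of_nat c2 * w a" using w by simp
  moreover have "of_nat c2 * w a \<le> of_nat c2 * (of_nat A::rat)" using w by (intro mult_left_mono) auto
  moreover have "0 \<le> of_nat c1 * w b" using w by simp
  ultimately have t1: "t \<le> of_nat c1 * of_nat A" and t2: "-(of_nat c2 * of_nat A) \<le> t"
    unfolding t_def by linarith+
  have hF: "(of_nat c1 * (of_nat (v b) - w b) - of_nat c2 * (of_nat (v a) - w a) :: rat) = of_int F - t"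
    by (simp add: F_def t_def algebra_simps)
  have hG: "(of_nat c1 * (of_nat (v' b) - w b) - of_nat c2 * (of_nat (v' a) - w a) :: rat) = of_int G - t"
    by (simp add: G_def t_def algebra_simps)
  have cA: "(of_int (int c1 * int A) :: rat) = of_nat c1 * of_nat A" by simp
  have cB: "(of_int (-(int c2 * int A)) :: rat) = -(of_nat c2 * of_nat A)" by simp
  from g consider "F = G" | "int c1 * int A < F" "int c1 * int A < G"
     | "F < -(int c2 * int A)" "G < -(int c2 * int A)" unfolding good_def by blast
  then show ?thesis
  proof cases
    case 1 then show ?thesis unfolding hF hG by (simp add: sim_def)
  next
    case 2
    have "of_int (int c1 * int A) < (of_int F :: rat)" "of_int (int c1 * int A) < (of_int G :: rat)"
      using 2 by (simp_all only: of_int_less_iff)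
    then show ?thesis using t1 unfolding hF hG cA sim_def by linarith
  next
    case 3
    have "(of_int F :: rat) < of_int (-(int c2 * int A))" "(of_int G :: rat) < of_int (-(int c2 * int A))"
      using 3 by (simp_all only: of_int_less_iff)
    then show ?thesis using t2 unfolding hF hG cB sim_def by linarith
  qed
qed

lemma reg_lemma:
  fixes A B :: nat and v v' :: "sig \<Rightarrow> nat"
  assumes B: "0 < B" and e: "eqv (int A) (int B) (int (v a)) (int (v b)) (int (v' a)) (int (v' b))"
  shows "(\<lambda>x. of_nat (v' x)) \<in> reg A B (\<lambda>x. of_nat (v x))"
  unfolding reg_def
proof (intro CollectI conjI allI impI)
  fix x show "0 \<le> (of_nat (v' x)::rat)" by simp
next
  fix w :: "sig \<Rightarrow> rat" and M :: "sig \<Rightarrow> sig \<Rightarrow> nat"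
  assume w: "\<forall>x. 0 \<le> w x \<and> w x \<le> of_nat A" and M: "\<forall>x y. M x y \<le> B"
  have s1: "sim (of_nat (M a a) * (of_nat (v b) - w b) - of_nat (M b a) * (of_nat (v a) - w a))
             (of_nat (M a a) * (of_nat (v' b) - w b) - of_nat (M b a) * (of_nat (v' a) - w a))"
    using gsim[OF e _ _ w] M by blast
  have s2: "sim (of_nat (M a b) * (of_nat (v b) - w b) - of_nat (M b b) * (of_nat (v a) - w a))
             (of_nat (M a b) * (of_nat (v' b) - w b) - of_nat (M b b) * (of_nat (v' a) - w a))"
    using gsim[OF e _ _ w] M by blast
  have "sim (of_nat 0 * (of_nat (v b) - w b) - of_nat 1 * (of_nat (v a) - w a))
             (of_nat 0 * (of_nat (v' b) - w b) - of_nat 1 * (of_nat (v' a) - w a))"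
    using gsim[OF e _ _ w, of 0 1] B by simp
  hence sa: "sim (of_nat (v a) - w a) (of_nat (v' a) - w a)" by (rule gsa)
  have "sim (of_nat 1 * (of_nat (v b) - w b) - of_nat 0 * (of_nat (v a) - w a))
             (of_nat 1 * (of_nat (v' b) - w b) - of_nat 0 * (of_nat (v' a) - w a))"
    using gsim[OF e _ _ w, of 1 0] B by simp
  hence sb: "sim (of_nat (v b) - w b) (of_nat (v' b) - w b)" by (rule gsb)
  have nn: "0 \<le> (of_nat (M a a)::rat)" "0 \<le> (of_nat (M b a)::rat)" "0 \<le> (of_nat (M a b)::rat)" "0 \<le> (of_nat (M b b)::rat)"
    by simp_all
  show "((\<lambda>x. of_nat (v x)) \<in> angle w M) = ((\<lambda>x. of_nat (v' x)) \<in> angle w M)"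
    unfolding angle_iff cone2[OF nn] chr2_def
    by (rule chr2'_inv[OF s1 s2 sa sb])
qed

theorem lemma3:
  shows "\<exists>K::rat. \<forall>A B C :: nat. A > 0 \<longrightarrow> B > 0 \<longrightarrow> C > 0 \<longrightarrow>
    (\<forall>v :: sig \<Rightarrow> nat. \<exists>v' :: sig \<Rightarrow> nat.
       vnorm (\<lambda>x. of_nat (v' x)) \<le> K * of_nat (A * B^2 + B * C) \<and>
       (\<lambda>x. of_nat (v' x)) \<in> reg A B (\<lambda>x. of_nat (v x)) \<and>
       (\<forall>x. int C dvd (int (v x) - int (v' x))))"
proof (rule exI[of _ 2], intro allI impI)
  fix A B C :: nat assume A: "A > 0" and B: "B > 0" and C: "C > 0"
    fix v :: "sig \<Rightarrow> nat"
    define P where "P = (\<lambda>v'::sig\<Rightarrow>nat. eqv (int A) (int B) (int (v a)) (int (v b)) (int (v' a)) (int (v' b))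
        \<and> (\<forall>x. int C dvd (int (v x) - int (v' x))))"
    have "P v" by (simp add: P_def eqv_refl)
    then obtain v' where v': "P v'" and mn: "\<forall>y. P y \<longrightarrow> v' a + v' b \<le> y a + y b"
      using ex_has_least_nat[of P v "\<lambda>y. y a + y b"] by blast
    define T where "T = 2*int A*int B*int B + 2*int B*int C"
    have bnd: "int (v' a) \<le> T \<and> int (v' b) \<le> T"
    proof (rule ccontr)
      assume "\<not> (int (v' a) \<le> T \<and> int (v' b) \<le> T)"
      then have big: "T < int (v' a) \<or> T < int (v' b)" by auto
      obtain u1 u2 where u: "0 \<le> u1" "u1 \<le> int B" "0 \<le> u2" "u2 \<le> int B" "u1 \<noteq> 0 \<or> u2 \<noteq> 0"
        "0 \<le> int (v' a) - int C*u1" "0 \<le> int (v' b) - int C*u2"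
        "eqv (int A) (int B) (int (v' a)) (int (v' b)) (int (v' a) - int C*u1) (int (v' b) - int C*u2)"
        using step[of "int A" "int B" "int C" "int (v' a)" "int (v' b)"] A B C big unfolding T_def by auto
      define v'' where "v'' = (\<lambda>x. case x of a \<Rightarrow> nat (int (v' a) - int C*u1) | b \<Rightarrow> nat (int (v' b) - int C*u2))"
      have va: "int (v'' a) = int (v' a) - int C * u1" using u by (simp add: v''_def)
      have vb: "int (v'' b) = int (v' b) - int C * u2" using u by (simp add: v''_def)
      have "P v''"
        unfolding P_def
      proof
        show "eqv (int A) (int B) (int (v a)) (int (v b)) (int (v'' a)) (int (v'' b))"
          unfolding va vb using eqv_trans[of "int A"] v' u(8) unfolding P_def by auto
        show "\<forall>x. int C dvd (int (v x) - int (v'' x))"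
        proof
          fix x
          have d: "int C dvd (int (v x) - int (v' x))" using v' unfolding P_def by blast
          show "int C dvd (int (v x) - int (v'' x))"
          proof (cases x)
            case a
            have ee: "int (v a) - int (v'' a) = (int (v a) - int (v' a)) + int C * u1" using va by simp
            show ?thesis unfolding a ee by (rule dvd_add[OF d[unfolded a] dvd_triv_left])
          next
            case b
            have ee: "int (v b) - int (v'' b) = (int (v b) - int (v' b)) + int C * u2" using vb by simp
            show ?thesis unfolding b ee by (rule dvd_add[OF d[unfolded b] dvd_triv_left])
          qed
        qed
      qed
      then have "v' a + v' b \<le> v'' a + v'' b" using mn by blast
      hence le: "int (v' a) + int (v' b) \<le> int (v'' a) + int (v'' b)" by linarith
      have "0 \<le> int C * u1" "0 \<le> int C * u2" using u C by simp_all
      moreover have "0 < int C * u1 \<or> 0 < int C * u2" using u C by auto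
      ultimately show False using le va vb by linarith
    qed
    have TT: "T = int (2*(A*B^2+B*C))" unfolding T_def by (simp add: power2_eq_square algebra_simps)
    have na: "v' a \<le> 2*(A*B^2+B*C)" and nb: "v' b \<le> 2*(A*B^2+B*C)" using bnd unfolding TT by linarith+
    have "(of_nat (v' a)::rat) \<le> of_nat (2*(A*B^2+B*C))" "(of_nat (v' b)::rat) \<le> of_nat (2*(A*B^2+B*C))"
      using na nb by (simp_all only: of_nat_le_iff)
    hence "vnorm (\<lambda>x. of_nat (v' x)) \<le> 2 * of_nat (A * B^2 + B * C)" by (simp add: vnorm_def)
    moreover have "(\<lambda>x. of_nat (v' x)) \<in> reg A B (\<lambda>x. (of_nat (v x)::rat))"
      using reg_lemma[OF B] v' unfolding P_def by blast
    moreover have "\<forall>x. int C dvd (int (v x) - int (v' x))" using v' unfolding P_def by blast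
    ultimately show "\<exists>v'::sig\<Rightarrow>nat. vnorm (\<lambda>x. of_nat (v' x)) \<le> 2 * of_nat (A * B^2 + B * C) \<and>
       (\<lambda>x. of_nat (v' x)) \<in> reg A B (\<lambda>x. of_nat (v x)) \<and>
       (\<forall>x. int C dvd (int (v x) - int (v' x)))" by blast
qed

end
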